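(* Let $n\geq 1$ and let $x_1,\dots,x_n\in(0,\tfrac12]$ be not all equal. With $A_n,G_n,A'_n,G'_n$ and $I$ as in the context, put $R=\frac{\ln\frac{I(A'_n,G'_n)}{I(A_n,G_n)}}{\ln\sqrt{\frac{A'_nG'_n}{A_nG_n}}}$. Then $$\max\left\{\frac{{A'_n}^n-{G'_n}^n}{{A_n}^n-{G_n}^n}\left(\frac{A_nG_n}{A'_nG'_n}\right)^{\frac n2},\ \frac{A'_n-G'_n}{A_n-G_n}\left(\frac{A_nG_n}{A'_nG'_n}\right)^{\frac12}\right\}<\frac{\ln\frac{A'_n}{G'_n}}{\ln\frac{A_n}{G_n}}<\frac{A'_n-G'_n}{A_n-G_n}\,R<\min\left\{\frac{A'_n-G'_n}{A_n-G_n},\ R\right\}<1,$$ $$\frac{A'_n}{G'_n}<\left(\frac{A'_n}{G'_n}\right)^{1/R}<\left(\frac{A_n}{G_n}\right)^{\frac{A'_n-G'_n}{A_n-G_n}}<\frac{A_n}{G_n}<\left(\frac{A'_n}{G'_n}\right)^{\left(\frac{A'_nG'_n}{A_nG_n}\right)^{\frac n2}},$$ and $$\frac{{A'_n}^n-{G'_n}^n}{{A_n}^n-{G_n}^n}<\frac{(A'_nG'_n)^{\frac n2}\ln\frac{A'_n}{G'_n}}{(A_nG_n)^{\frac n2}\ln\frac{A_n}{G_n}}<\left(\frac{A'_nG'_n}{A_nG_n}\right)^{\frac n2}.$$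
   Context: $A_n=\frac1n\sum_{i=1}^n x_i$ and $G_n=\prod_{i=1}^n x_i^{1/n}$ are the arithmetic and geometric means of $x_1,\dots,x_n$; $A'_n=\frac1n\sum_{i=1}^n(1-x_i)$ and $G'_n=\prod_{i=1}^n(1-x_i)^{1/n}$ are the arithmetic and geometric means of $1-x_1,\dots,1-x_n$. For $u,v>0$ the identric mean is $I(u,v)=\frac{1}{e}\left(\frac{u^u}{v^v}\right)^{1/(u-v)}$ if $u\neq v$ and $I(u,u)=u$. *)

theory Defs
  imports Complex_Main
begin

text \<open>Means of x_1,...,x_n, where the sample is indexed by i < n (x 0, ..., x (n-1)).\<close>

definition AM :: "nat \<Rightarrow> (nat \<Rightarrow> real) \<Rightarrow> real" where
  "AM n x = (\<Sum>i<n. x i) / real n"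

definition GM :: "nat \<Rightarrow> (nat \<Rightarrow> real) \<Rightarrow> real" where
  "GM n x = (\<Prod>i<n. x i powr (1 / real n))"

definition AM' :: "nat \<Rightarrow> (nat \<Rightarrow> real) \<Rightarrow> real" where
  "AM' n x = (\<Sum>i<n. 1 - x i) / real n"

definition GM' :: "nat \<Rightarrow> (nat \<Rightarrow> real) \<Rightarrow> real" where
  "GM' n x = (\<Prod>i<n. (1 - x i) powr (1 / real n))"

definition identric :: "real \<Rightarrow> real \<Rightarrow> real" where
  "identric u v = (if u = v then u
     else (1 / exp 1) * ((u powr u) / (v powr v)) powr (1 / (u - v)))"

end

theory Submission
  imports Defs
begin

lemma sinh_gt_self: assumes "0 < s" shows "s < sinh (s::real)"
proof -
  have "(\<lambda>t. sinh t - t) 0 < (\<lambda>t. sinh t - t) s"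
  proof (rule DERIV_pos_imp_increasing_open[OF assms])
    fix x :: real assume "0 < x" "x < s"
    have "1 < cosh x" using cosh_real_strict_mono[of 0 x] \<open>0<x\<close> by simp
    moreover have "((\<lambda>t. sinh t - t) has_real_derivative (cosh x - 1)) (at x)"
      by (auto intro!: derivative_eq_intros)
    ultimately show "\<exists>y. ((\<lambda>t. sinh t - t) has_real_derivative y) (at x) \<and> 0 < y" by auto
  next
    show "continuous_on {0..s} (\<lambda>t. sinh t - t)" by (intro continuous_intros)
  qed
  then show ?thesis by simp
qed

lemma sinh_lt_xcosh: assumes "0 < s" shows "sinh s < s * cosh (s::real)"
proof -
  have "(\<lambda>t. t * cosh t - sinh t) 0 < (\<lambda>t. t * cosh t - sinh t) s"
  proof (rule DERIV_pos_imp_increasing_open[OF assms])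
    fix x :: real assume "0 < x" "x < s"
    have "0 < x * sinh x" using \<open>0<x\<close> by simp
    moreover have "((\<lambda>t. t * cosh t - sinh t) has_real_derivative (x * sinh x)) (at x)"
      by (auto intro!: derivative_eq_intros)
    ultimately show "\<exists>y. ((\<lambda>t. t * cosh t - sinh t) has_real_derivative y) (at x) \<and> 0 < y" by auto
  next
    show "continuous_on {0..s} (\<lambda>t. t * cosh t - sinh t)" by (intro continuous_intros)
  qed
  then show ?thesis by simp
qed

lemma sinh_div_mono: assumes "0 < b" "b < a" shows "sinh b / b < sinh a / (a::real)"
proof (rule DERIV_pos_imp_increasing[OF assms(2)])
  fix x :: real assume "b \<le> x" "x \<le> a"
  hence x: "0 < x" using assms by simp
  have "0 < (x * cosh x - sinh x) / x^2" using sinh_lt_xcosh[OF x] x by simp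
  moreover have "((\<lambda>t. sinh t / t) has_real_derivative ((x * cosh x - sinh x) / x^2)) (at x)"
    using x by (auto intro!: derivative_eq_intros simp: field_simps power2_eq_square)
  ultimately show "\<exists>y. ((\<lambda>t. sinh t / t) has_real_derivative y) (at x) \<and> 0 < y" by auto
qed

lemma sinh_cosh_gt: assumes "0 < s" shows "s < sinh s * cosh (s::real)"
  using sinh_gt_self[of "2*s"] assms by (simp add: sinh_double)

lemma psi_mono: assumes "0 < b" "b < a" shows "b * cosh b / sinh b < a * cosh a / sinh (a::real)"
proof (rule DERIV_pos_imp_increasing[OF assms(2)])
  fix x :: real assume "b \<le> x" "x \<le> a"
  hence x: "0 < x" using assms by simp
  have sx: "0 < sinh x" using x by simp
  have "0 < (sinh x * cosh x - x) / (sinh x)^2" using sinh_cosh_gt[OF x] sx by simp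
  moreover have "((\<lambda>t. t * cosh t / sinh t) has_real_derivative ((sinh x * cosh x - x) / (sinh x)^2)) (at x)"
    using sx by (auto intro!: derivative_eq_intros simp: field_simps power2_eq_square cosh_square_eq[unfolded power2_eq_square])
  ultimately show "\<exists>y. ((\<lambda>t. t * cosh t / sinh t) has_real_derivative y) (at x) \<and> 0 < y" by auto
qed

definition psi :: "real \<Rightarrow> real" where "psi s = s * cosh s / sinh s - 1"

lemma psi_nonneg: "0 < s \<Longrightarrow> 0 \<le> psi s"
  using sinh_lt_xcosh[of s] by (simp add: psi_def field_simps)

lemma psi_less: assumes s: "0 < s" shows "psi s < s"
proof -
  have e: "cosh s - sinh s = exp (-s)" using sinh_plus_cosh[of s]
    by (simp add: sinh_field_def cosh_field_def field_simps)
  have "exp (-s) < 1" using s by simp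
  hence "s * exp (-s) < s" using s by simp
  also have "\<dots> < sinh s" using sinh_gt_self[OF s] .
  finally have "s * (cosh s - sinh s) < sinh s" using e by simp
  hence "s * cosh s < (1 + s) * sinh s" by (simp add: algebra_simps)
  thus ?thesis using s by (simp add: psi_def field_simps)
qed

lemma E6: assumes a: "0 < a" shows "sinh a < exp a * (a - psi a)"
proof -
  have sa: "0 < sinh a" using a by simp
  have key: "a < sinh a * cosh a" using sinh_cosh_gt[OF a] .
  have ex: "exp a = cosh a + sinh a" using sinh_plus_cosh[of a] by simp
  have sq: "cosh a * cosh a = sinh a * sinh a + 1" using cosh_square_eq[of a] by (simp add: power2_eq_square)
  have "exp a * (a - psi a) * sinh a = (cosh a + sinh a) * (a * sinh a + sinh a - a * cosh a)"
    using sa by (simp add: psi_def ex field_simps)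
  also have "\<dots> = cosh a * sinh a + sinh a * sinh a - a * (cosh a * cosh a - sinh a * sinh a)"
    by (simp add: algebra_simps)
  also have "\<dots> = cosh a * sinh a + sinh a * sinh a - a" using sq by simp
  finally have "exp a * (a - psi a) * sinh a > sinh a * sinh a" using key by (simp add: mult.commute)
  thus ?thesis using sa by simp
qed

lemma E7: assumes a: "0 < (a::real)" shows "sinh a \<le> a * exp a"
proof -
  have "sinh a < a * cosh a" using sinh_lt_xcosh[OF a] .
  moreover have "0 \<le> a * sinh a" using a by simp
  moreover have "a * exp a = a * cosh a + a * sinh a" using sinh_plus_cosh[of a] by (simp add: algebra_simps flip: sinh_plus_cosh)
  ultimately show ?thesis by linarith
qed

lemma core_abs:
  fixes a b D N :: real
  assumes b: "0 < b" and ba: "b < a" and aD: "a \<le> D" and N: "1 \<le> N"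
    and alz: "exp D * sinh b < sinh a"
    and np: "sinh (N*a) \<le> exp (N*D) * sinh (N*b)"
  shows "sinh (N*b) / sinh (N*a) < b / a"
    and "sinh b / sinh a < b / a"
    and "0 < exp D * sinh b / sinh a" and "exp D * sinh b / sinh a < 1"
    and "0 < (D + psi b - psi a) / D" and "(D + psi b - psi a) / D < 1"
    and "b / a < (exp D * sinh b / sinh a) * ((D + psi b - psi a) / D)"
    and "a < b * exp (N*D)"
proof -
  have a: "0 < a" using b ba by simp
  have D: "0 < D" using a aD by simp
  have sa: "0 < sinh a" "0 < sinh b" using a b by auto
  have sNa: "0 < sinh (N*a)" "0 < sinh (N*b)" using a b N by auto
  have m1: "sinh (N*b) / (N*b) < sinh (N*a) / (N*a)"
    using sinh_div_mono[of "N*b" "N*a"] b ba N by simp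
  show s1: "sinh (N*b) / sinh (N*a) < b / a"
    using m1 sNa a b N by (simp add: field_simps)
  show "sinh b / sinh a < b / a"
    using sinh_div_mono[OF b ba] sa a b by (simp add: field_simps)
  show "0 < exp D * sinh b / sinh a" using sa by simp
  show "exp D * sinh b / sinh a < 1" using alz sa by simp
  have pb: "0 \<le> psi b" using psi_nonneg[OF b] .
  have pa: "psi a < a" using psi_less[OF a] .
  have pm: "psi b < psi a" using psi_mono[OF b ba] by (simp add: psi_def)
  show "0 < (D + psi b - psi a) / D" using pb pa aD D by simp
  show "(D + psi b - psi a) / D < 1" using pm D by simp
  define c where "c = a - psi a"
  define d where "d = D - a"
  have c: "0 < c" using pa c_def by simp
  have d: "0 \<le> d" using aD d_def by simp
  have F1: "sinh a < exp a * c" using E6[OF a] c_def by simp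
  have F2: "sinh a \<le> a * exp a" using E7[OF a] .
  have F3: "exp a * (1 + d) \<le> exp D"
  proof -
    have "exp D = exp a * exp d" using d_def by (simp add: exp_add[symmetric])
    thus ?thesis using exp_ge_add_one_self[of d] by simp
  qed
  have "D * sinh a = a * sinh a + d * sinh a" unfolding d_def by (simp add: algebra_simps)
  also have "\<dots> < a * (exp a * c) + d * (a * exp a)"
    using F1 F2 a d by (intro add_less_le_mono mult_strict_left_mono mult_left_mono) auto
  also have "\<dots> \<le> a * (exp a * (1 + d) * (d + c))"
  proof -
    have "0 \<le> a * exp a * (d * c + d * d)" using a d c by simp
    thus ?thesis by (simp add: algebra_simps)
  qed
  also have "\<dots> \<le> a * (exp D * (d + c))"
    using F3 a c d by (intro mult_left_mono mult_right_mono) auto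
  finally have G: "D * sinh a < a * (exp D * (d + c))" .
  have H: "b * (D * sinh a) < a * exp D * sinh b * (D + psi b - psi a)"
  proof -
    have "b * (D * sinh a) < b * (a * (exp D * (d + c)))" using G b by simp
    also have "\<dots> \<le> sinh b * (a * (exp D * (d + c + psi b)))"
      using sinh_gt_self[OF b] pb a b c d by (intro mult_mono) auto
    also have "d + c + psi b = D + psi b - psi a" using c_def d_def by simp
    finally show ?thesis by (simp add: algebra_simps)
  qed
  show "b / a < (exp D * sinh b / sinh a) * ((D + psi b - psi a) / D)"
    using H a D sa by (simp add: field_simps)
  have "a / b < sinh (N*a) / sinh (N*b)" using s1 sNa a b by (simp add: field_simps)
  also have "\<dots> \<le> exp (N*D)" using np sNa by (simp add: field_simps)
  finally show "a < b * exp (N*D)" using b by (simp add: field_simps)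
qed

lemma pair_rep:
  fixes u v :: real
  assumes v: "0 < v" and uv: "v < u"
  defines "s \<equiv> ln (u / v) / 2" and "t \<equiv> (ln u + ln v) / 2"
  shows "u = exp (t + s)" "v = exp (t - s)" "u - v = 2 * exp t * sinh s"
    "u + v = 2 * exp t * cosh s" "0 < s"
    "0 < identric u v" "ln (identric u v) = t + psi s"
proof -
  have u: "0 < u" using v uv by simp
  have l: "ln (u/v) = ln u - ln v" using u v by (simp add: ln_div)
  have "t + s = ln u" unfolding s_def t_def l by (simp add: field_simps)
  thus eu: "u = exp (t + s)" using u by simp
  have "t - s = ln v" unfolding s_def t_def l by (simp add: field_simps)
  thus ev: "v = exp (t - s)" using v by simp
  show sp: "0 < s" unfolding s_def using u v uv by simp
  have d: "u - v = 2 * exp t * sinh s"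
    by (subst eu, subst ev) (simp add: sinh_field_def exp_add exp_diff field_simps exp_minus)
  show "u - v = 2 * exp t * sinh s" by (fact d)
  have p: "u + v = 2 * exp t * cosh s"
    by (subst eu, subst ev) (simp add: cosh_field_def exp_add exp_diff field_simps exp_minus)
  show "u + v = 2 * exp t * cosh s" by (fact p)
  have uv': "u \<noteq> v" using uv by simp
  have pw: "0 < (u powr u / v powr v) powr (1 / (u - v))" using u v by simp
  show "0 < identric u v" unfolding identric_def using uv' pw by simp
  have iv: "identric u v = exp (-1) * (u powr u / v powr v) powr (1 / (u - v))"
    unfolding identric_def using uv' by (simp add: exp_minus field_simps)
  have "ln (identric u v) = -1 + ln ((u powr u / v powr v) powr (1 / (u - v)))"
    unfolding iv using pw by (simp add: ln_mult)
  also have "ln ((u powr u / v powr v) powr (1 / (u - v))) = (1 / (u - v)) * ln (u powr u / v powr v)"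
    using u v by (simp add: ln_powr)
  also have "ln (u powr u / v powr v) = u * ln u - v * ln v"
    using u v by (simp add: ln_div ln_powr)
  also have "-1 + 1 / (u - v) * (u * ln u - v * ln v) = -1 + (u * ln u - v * ln v) / (u - v)" by simp
  also have "u * ln u - v * ln v = t * (u - v) + s * (u + v)"
    unfolding s_def t_def l by (simp add: field_simps)
  also have "(t * (u - v) + s * (u + v)) / (u - v) = t + s * cosh s / sinh s"
    using d p sp by (simp add: field_simps)
  finally show "ln (identric u v) = t + psi s" by (simp add: psi_def)
qed

lemma core_AG:
  fixes A G A' G' :: real and n :: nat
  assumes G: "0 < G" and GA: "G < A" and G': "0 < G'" and GA': "G' < A'"
    and AA': "A \<le> A'" and AG': "A \<le> G'"
    and kf: "A' / G' < A / G" and alz: "A' - G' < A - G"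
    and np: "A ^ n - G ^ n \<le> A' ^ n - G' ^ n" and n: "1 \<le> n"
  shows "let R = ln (identric A' G' / identric A G) / ln (sqrt ((A' * G') / (A * G)))
         in max (((A' ^ n - G' ^ n) / (A ^ n - G ^ n)) * ((A * G) / (A' * G')) powr (real n / 2))
                (((A' - G') / (A - G)) * ((A * G) / (A' * G')) powr (1 / 2))
              < ln (A' / G') / ln (A / G)
          \<and> ln (A' / G') / ln (A / G) < ((A' - G') / (A - G)) * R
          \<and> ((A' - G') / (A - G)) * R < min ((A' - G') / (A - G)) R
          \<and> min ((A' - G') / (A - G)) R < 1
          \<and> A' / G' < (A' / G') powr (1 / R)
          \<and> (A' / G') powr (1 / R) < (A / G) powr ((A' - G') / (A - G))
          \<and> (A / G) powr ((A' - G') / (A - G)) < A / G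
          \<and> A / G < (A' / G') powr (((A' * G') / (A * G)) powr (real n / 2))
          \<and> (A' ^ n - G' ^ n) / (A ^ n - G ^ n)
              < ((A' * G') powr (real n / 2) * ln (A' / G')) / ((A * G) powr (real n / 2) * ln (A / G))
          \<and> ((A' * G') powr (real n / 2) * ln (A' / G')) / ((A * G) powr (real n / 2) * ln (A / G))
              < ((A' * G') / (A * G)) powr (real n / 2)"
proof -
  define a where "a = ln (A / G) / 2"
  define m where "m = (ln A + ln G) / 2"
  define b where "b = ln (A' / G') / 2"
  define m' where "m' = (ln A' + ln G') / 2"
  define D where "D = m' - m"
  define N where "N = real n"
  note r1 = pair_rep[OF G GA, folded a_def m_def]
  note r2 = pair_rep[OF G' GA', folded b_def m'_def]
  have A: "0 < A" using G GA by simp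
  have A': "0 < A'" using G' GA' by simp
  have a: "0 < a" and b: "0 < b" using r1 r2 by auto
  have ba: "b < a" unfolding a_def b_def using kf A G A' G' by simp
  have aD: "a \<le> D"
  proof -
    have "ln A \<le> ln A'" "ln A \<le> ln G'" using AA' AG' A by auto
    moreover have "ln (A/G) = ln A - ln G" "ln (A'/G') = ln A' - ln G'" using A G A' G' by (auto simp: ln_div)
    ultimately have "ln (A / G) / 2 \<le> (ln A' + ln G') / 2 - (ln A + ln G) / 2"
      by (simp add: field_simps)
    thus ?thesis unfolding a_def D_def m_def m'_def .
  qed
  have N: "1 \<le> N" using n N_def by simp
  have eD: "exp m' = exp D * exp m" unfolding D_def by (simp add: exp_diff)
  have alz': "exp D * sinh b < sinh a"
  proof -
    have "2 * exp m' * sinh b < 2 * exp m * sinh a" using alz r1(3) r2(3) by simp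
    thus ?thesis unfolding eD by simp
  qed
  have pw: "\<And>t s. exp (t + s) ^ n = exp (N * t + N * s)" "\<And>t s. exp (t - s) ^ n = exp (N * t - N * s)"
    by (simp_all add: N_def exp_of_nat_mult[symmetric] algebra_simps)
  have dn: "A ^ n - G ^ n = 2 * exp (N*m) * sinh (N*a)"
    by (subst r1(1), subst r1(2), simp only: pw) (simp add: sinh_field_def exp_add exp_diff field_simps exp_minus)
  have dn': "A' ^ n - G' ^ n = 2 * exp (N*m') * sinh (N*b)"
    by (subst r2(1), subst r2(2), simp only: pw) (simp add: sinh_field_def exp_add exp_diff field_simps exp_minus)
  have eND: "exp (N*m') = exp (N*D) * exp (N*m)" unfolding D_def by (simp add: exp_diff right_diff_distrib)
  have np': "sinh (N*a) \<le> exp (N*D) * sinh (N*b)"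
    using np unfolding dn dn' eND by simp
  note C = core_abs[OF b ba aD N alz' np']
  have lnAG: "ln (A*G) = 2*m" "ln (A'*G') = 2*m'" unfolding m_def m'_def using A G A' G' by (auto simp: ln_mult)
  have l1: "ln (A/G) = 2*a" "ln (A'/G') = 2*b" unfolding a_def b_def by auto
  have q1: "A/G = exp (2*a)" "A'/G' = exp (2*b)" using l1 A G A' G' by (metis divide_pos_pos exp_ln)+
  have eQ: "(A' - G') / (A - G) = exp D * sinh b / sinh a"
    unfolding r1(3) r2(3) eD by simp
  have eR: "ln (identric A' G' / identric A G) / ln (sqrt ((A' * G') / (A * G))) = (D + psi b - psi a) / D"
  proof -
    have "ln (identric A' G' / identric A G) = ln (identric A' G') - ln (identric A G)"
      using r1(6) r2(6) by (simp add: ln_div)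
    also have "\<dots> = D + psi b - psi a" unfolding r1(7) r2(7) D_def by simp
    finally have 1: "ln (identric A' G' / identric A G) = D + psi b - psi a" .
    have "ln (sqrt ((A' * G') / (A * G))) = ln ((A' * G') / (A * G)) / 2"
      using A G A' G' by (simp add: ln_sqrt)
    also have "ln ((A' * G') / (A * G)) = ln (A'*G') - ln (A*G)" using A G A' G' by (simp add: ln_div)
    finally have 2: "ln (sqrt ((A' * G') / (A * G))) = D" unfolding lnAG D_def by simp
    show ?thesis unfolding 1 2 ..
  qed
  have eT: "(A' ^ n - G' ^ n) / (A ^ n - G ^ n) = exp (N*D) * sinh (N*b) / sinh (N*a)"
    unfolding dn dn' eND by simp
  have lr: "ln ((A*G)/(A'*G')) = - 2*D" "ln ((A'*G')/(A*G)) = 2*D"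
    using A G A' G' lnAG unfolding D_def by (simp_all add: ln_div)
  have ePn: "((A*G)/(A'*G')) powr (N/2) = exp (-(N*D))"
    using A G A' G' by (simp add: powr_def lr)
  have eP1: "((A*G)/(A'*G')) powr (1/2) = exp (-D)"
    using A G A' G' by (simp add: powr_def lr)
  have eP3: "((A'*G')/(A*G)) powr (N/2) = exp (N*D)"
    using A G A' G' by (simp add: powr_def lr)
  have eM: "(A'*G') powr (N/2) = exp (N*m')" "(A*G) powr (N/2) = exp (N*m)"
    using A G A' G' by (simp_all add: powr_def lnAG)
  define Q where "Q = exp D * sinh b / sinh a"
  define R where "R = (D + psi b - psi a) / D"
  have Q: "0 < Q" "Q < 1" and R: "0 < R" "R < 1" and LQR: "b/a < Q * R"
    using C unfolding Q_def R_def by auto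
  have i0: "max (exp (N*D) * sinh (N*b) / sinh (N*a) * exp (-(N*D))) (Q * exp (-D)) < (2*b) / (2*a)"
  proof -
    have e1: "exp (N*D) * sinh (N*b) / sinh (N*a) * exp (-(N*D)) = sinh (N*b) / sinh (N*a)"
      by (simp add: exp_minus field_simps)
    have e2: "Q * exp (-D) = sinh b / sinh a" unfolding Q_def by (simp add: exp_minus field_simps)
    show ?thesis unfolding e1 e2 max_less_iff_conj using C(1,2) a b by simp
  qed
  have i1: "(2*b) / (2*a) < Q * R" using LQR by simp
  have i2: "Q * R < min Q R" using Q R by (simp add: mult_less_cancel_left1 mult_less_cancel_right1)
  have i3: "min Q R < 1" using Q by simp
  have i4: "exp (2*b) < exp (2*b) powr (1/R)"
    using R b by (simp add: powr_def field_simps)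
  have i5: "exp (2*b) powr (1/R) < exp (2*a) powr Q"
  proof -
    have "b / R < a * Q" using LQR R a by (simp add: field_simps)
    moreover have "1 / R * (2*b) = 2 * (b / R)" "Q * (2*a) = 2 * (a * Q)" by simp_all
    ultimately have "1 / R * (2*b) < Q * (2*a)" by linarith
    thus ?thesis by (simp add: powr_def)
  qed
  have i6: "exp (2*a) powr Q < exp (2*a)"
    using Q a by (simp add: powr_def field_simps)
  have i7: "exp (2*a) < exp (2*b) powr exp (N*D)"
    using C(8) by (simp add: powr_def mult.commute)
  have i8: "exp (N*D) * sinh (N*b) / sinh (N*a) < (exp (N*m') * (2*b)) / (exp (N*m) * (2*a))"
  proof -
    have "exp (N*m') * (2*b) / (exp (N*m) * (2*a)) = exp (N*D) * (b / a)"
      unfolding eND by (simp add: field_simps)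
    moreover have "exp (N*D) * sinh (N*b) / sinh (N*a) = exp (N*D) * (sinh (N*b) / sinh (N*a))" by simp
    moreover have "exp (N*D) * (sinh (N*b) / sinh (N*a)) < exp (N*D) * (b / a)"
      using C(1) by (intro mult_strict_left_mono) auto
    ultimately show ?thesis by simp
  qed
  have i9: "(exp (N*m') * (2*b)) / (exp (N*m) * (2*a)) < exp (N*D)"
  proof -
    have "exp (N*m') * (2*b) / (exp (N*m) * (2*a)) = exp (N*D) * (b / a)"
      unfolding eND by (simp add: field_simps)
    moreover have "exp (N*D) * (b / a) < exp (N*D) * 1"
      using ba a by (intro mult_strict_left_mono) auto
    ultimately show ?thesis by simp
  qed
  show ?thesis
    unfolding Let_def N_def[symmetric] eQ eR eT ePn eP1 eP3 eM l1 q1 ln_exp Q_def[symmetric] R_def[symmetric]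
    using i0 i1 i2 i3 i4 i5 i6 i7 i8 i9 by blast
qed

lemma smooth_gen:
  fixes P :: "(nat \<Rightarrow> real) \<Rightarrow> bool" and F :: "(nat \<Rightarrow> real) \<Rightarrow> real"
  assumes step: "\<And>x. P x \<Longrightarrow> \<not>(\<forall>k<n. x k = c) \<Longrightarrow>
      \<exists>y. P y \<and> {k. k<n \<and> y k \<noteq> c} \<subset> {k. k<n \<and> x k \<noteq> c} \<and> F x \<le> F y"
  shows "P x \<Longrightarrow> \<exists>y. P y \<and> (\<forall>k<n. y k = c) \<and> F x \<le> F y"
proof (induction "card {k. k<n \<and> x k \<noteq> c}" arbitrary: x rule: less_induct)
  case less
  show ?case
  proof (cases "\<forall>k<n. x k = c")
    case True thus ?thesis using less.prems by auto
  next
    case False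
    obtain y where y: "P y" "{k. k<n \<and> y k \<noteq> c} \<subset> {k. k<n \<and> x k \<noteq> c}" "F x \<le> F y"
      using step[OF less.prems False] by blast
    have "card {k. k<n \<and> y k \<noteq> c} < card {k. k<n \<and> x k \<noteq> c}"
      using y(2) by (intro psubset_card_mono) auto
    from less.hyps[OF this y(1)] obtain z where "P z" "\<forall>k<n. z k = c" "F y \<le> F z" by blast
    thus ?thesis using y(3) by force
  qed
qed

lemma prod_two: "i<(n::nat) \<Longrightarrow> j<n \<Longrightarrow> i\<noteq>j \<Longrightarrow>
   (\<Prod>k<n. f k) = f i * f j * (\<Prod>k\<in>{..<n}-{i}-{j}. f k)"
proof -
  assume a: "i<n" "j<n" "i\<noteq>j"
  have "prod f {..<n} = f i * prod f ({..<n}-{i})" using a by (intro prod.remove) auto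
  moreover have "prod f ({..<n}-{i}) = f j * prod f ({..<n}-{i}-{j})" using a by (intro prod.remove) auto
  ultimately show ?thesis by (simp add: mult.assoc)
qed

lemma sum_two: "i<(n::nat) \<Longrightarrow> j<n \<Longrightarrow> i\<noteq>j \<Longrightarrow>
   (\<Sum>k<n. f k) = f i + f j + (\<Sum>k\<in>{..<n}-{i}-{j}. f k)"
proof -
  assume a: "i<n" "j<n" "i\<noteq>j"
  have "sum f {..<n} = f i + sum f ({..<n}-{i})" using a by (intro sum.remove) auto
  moreover have "sum f ({..<n}-{i}) = f j + sum f ({..<n}-{i}-{j})" using a by (intro sum.remove) auto
  ultimately show ?thesis by (simp add: add.assoc)
qed

lemma prod_rest_eq: "(\<Prod>k\<in>{..<n}-{i}-{j}. g ((x(i:=a, j:=b)) k)) = (\<Prod>k\<in>{..<n}-{i}-{j}. g (x k))"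
  by (intro prod.cong) auto

lemma sum_rest_eq: "(\<Sum>k\<in>{..<n}-{i}-{j}. g ((x(i:=a, j:=b)) k)) = (\<Sum>k\<in>{..<n}-{i}-{j}. g (x k))"
  by (intro sum.cong) auto

definition Pm :: "nat \<Rightarrow> real \<Rightarrow> (nat \<Rightarrow> real) \<Rightarrow> bool" where
  "Pm n c x \<longleftrightarrow> (\<forall>k<n. 0 < x k \<and> x k \<le> 1/2) \<and> (\<Sum>k<n. x k) = real n * c"

lemma mean_pair:
  assumes "Pm n c x" "\<not>(\<forall>k<n. x k = c)"
  shows "\<exists>i j. i<n \<and> j<n \<and> x i < c \<and> c < x j"
proof -
  obtain k where k: "k<n" "x k \<noteq> c" using assms(2) by blast
  have s: "(\<Sum>k<n. x k) = (\<Sum>k<n. c)" using assms(1) by (simp add: Pm_def)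
  have "\<exists>i<n. x i < c"
  proof (rule ccontr)
    assume h: "\<not> ?thesis"
    hence "\<forall>i\<in>{..<n}. c \<le> x i" by auto
    moreover have "\<exists>i\<in>{..<n}. c < x i" using k h by force
    ultimately have "(\<Sum>k<n. c) < (\<Sum>k<n. x k)" by (intro sum_strict_mono_ex1) auto
    thus False using s by simp
  qed
  moreover have "\<exists>j<n. c < x j"
  proof (rule ccontr)
    assume h: "\<not> ?thesis"
    hence "\<forall>i\<in>{..<n}. x i \<le> c" by auto
    moreover have "\<exists>i\<in>{..<n}. x i < c" using k h by force
    ultimately have "(\<Sum>k<n. x k) < (\<Sum>k<n. c)" by (intro sum_strict_mono_ex1) auto
    thus False using s by simp
  qed
  ultimately show ?thesis by blast
qed

lemma mean_step:
  assumes P: "Pm n c x" and i: "i<n" and j: "j<n" and xi: "x i < c" and xj: "c < x j"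
  defines "y \<equiv> x(i := c, j := x i + x j - c)"
  shows "Pm n c y" "{k. k<n \<and> y k \<noteq> c} \<subset> {k. k<n \<and> x k \<noteq> c}" "i \<noteq> j"
    "y i = c" "y j = x i + x j - c"
proof -
  show ij: "i \<noteq> j" using xi xj by auto
  show yi: "y i = c" using ij unfolding y_def by simp
  show yj: "y j = x i + x j - c" unfolding y_def by simp
  have xb: "0 < x i" "x j \<le> 1/2" using P i j by (auto simp: Pm_def)
  have dom: "\<forall>k<n. 0 < y k \<and> y k \<le> 1/2"
  proof (intro allI impI)
    fix k assume k: "k < n"
    show "0 < y k \<and> y k \<le> 1/2"
    proof (cases "k = j")
      case True thus ?thesis using yj xi xj xb by simp
    next
      case False
      show ?thesis
      proof (cases "k = i")
        case True thus ?thesis using yi xi xj xb by simp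
      next
        case False
        hence "y k = x k" using \<open>k \<noteq> j\<close> unfolding y_def by simp
        thus ?thesis using P k by (simp add: Pm_def)
      qed
    qed
  qed
  have r: "(\<Sum>k\<in>{..<n}-{i}-{j}. y k) = (\<Sum>k\<in>{..<n}-{i}-{j}. x k)"
    unfolding y_def by (intro sum.cong) auto
  have "(\<Sum>k<n. y k) = (\<Sum>k<n. x k)"
    unfolding sum_two[OF i j ij, of y] sum_two[OF i j ij, of x] r yi yj by simp
  thus "Pm n c y" using dom P by (simp add: Pm_def)
  show "{k. k<n \<and> y k \<noteq> c} \<subset> {k. k<n \<and> x k \<noteq> c}"
  proof
    show "{k. k<n \<and> y k \<noteq> c} \<subseteq> {k. k<n \<and> x k \<noteq> c}"
    proof
      fix k assume "k \<in> {k. k<n \<and> y k \<noteq> c}"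
      hence k: "k<n" "y k \<noteq> c" by auto
      have "x k \<noteq> c"
      proof (cases "k = j")
        case True thus ?thesis using xj by simp
      next
        case False
        hence "k \<noteq> i" using k(2) yi by auto
        hence "y k = x k" using False unfolding y_def by simp
        thus ?thesis using k(2) by simp
      qed
      thus "k \<in> {k. k<n \<and> x k \<noteq> c}" using k(1) by simp
    qed
    have "i \<in> {k. k<n \<and> x k \<noteq> c}" "i \<notin> {k. k<n \<and> y k \<noteq> c}" using yi xi i by auto
    thus "{k. k<n \<and> y k \<noteq> c} \<noteq> {k. k<n \<and> x k \<noteq> c}" by blast
  qed
qed

lemma mean_smooth_le:
  fixes F :: "(nat \<Rightarrow> real) \<Rightarrow> real"
  assumes P: "Pm n c x"
    and Fs: "\<And>x i j. Pm n c x \<Longrightarrow> i<n \<Longrightarrow> j<n \<Longrightarrow> x i < c \<Longrightarrow> c < x j \<Longrightarrow>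
              F x \<le> F (x(i := c, j := x i + x j - c))"
  shows "\<exists>y. (\<forall>k<n. y k = c) \<and> F x \<le> F y"
proof -
  have "\<exists>y. Pm n c y \<and> (\<forall>k<n. y k = c) \<and> F x \<le> F y"
  proof (rule smooth_gen[where P="Pm n c" and F=F and n=n and c=c])
    fix x assume Px: "Pm n c x" and ne: "\<not>(\<forall>k<n. x k = c)"
    obtain i j where ij: "i<n" "j<n" "x i < c" "c < x j" using mean_pair[OF Px ne] by blast
    note st = mean_step[OF Px ij]
    show "\<exists>y. Pm n c y \<and> {k. k<n \<and> y k \<noteq> c} \<subset> {k. k<n \<and> x k \<noteq> c} \<and> F x \<le> F y"
      using st(1,2) Fs[OF Px ij] by blast
  qed (rule P)
  thus ?thesis by blast
qed

lemma mean_smooth_less: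
  fixes F :: "(nat \<Rightarrow> real) \<Rightarrow> real"
  assumes P: "Pm n c x" and ne: "\<not>(\<forall>k<n. x k = c)"
    and Fs: "\<And>x i j. Pm n c x \<Longrightarrow> i<n \<Longrightarrow> j<n \<Longrightarrow> x i < c \<Longrightarrow> c < x j \<Longrightarrow>
              F x < F (x(i := c, j := x i + x j - c))"
  shows "\<exists>y. (\<forall>k<n. y k = c) \<and> F x < F y"
proof -
  obtain i j where ij: "i<n" "j<n" "x i < c" "c < x j" using mean_pair[OF P ne] by blast
  note st = mean_step[OF P ij]
  have "\<exists>z. (\<forall>k<n. z k = c) \<and> F (x(i := c, j := x i + x j - c)) \<le> F z"
  proof (rule mean_smooth_le[OF st(1)])
    fix x i j assume "Pm n c x" "i<n" "j<n" "x i < c" "c < x j"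
    from Fs[OF this] show "F x \<le> F (x(i := c, j := x i + x j - c))" by simp
  qed
  then obtain z where z: "\<forall>k<n. z k = c" "F (x(i := c, j := x i + x j - c)) \<le> F z" by blast
  thus ?thesis using Fs[OF P ij] by (intro exI[of _ z]) auto
qed

lemma step_prod:
  fixes g :: "real \<Rightarrow> real" and n :: nat
  assumes i: "i<n" and j: "j<n" and ij: "i \<noteq> j"
  shows "(\<Prod>k<n. g ((x(i := a, j := b)) k)) = g a * g b * (\<Prod>k\<in>{..<n}-{i}-{j}. g (x k))"
    and "(\<Prod>k<n. g (x k)) = g (x i) * g (x j) * (\<Prod>k\<in>{..<n}-{i}-{j}. g (x k))"
proof -
  have 1: "(\<Prod>k<n. g ((x(i := a, j := b)) k)) = g ((x(i := a, j := b)) i) * g ((x(i := a, j := b)) j) *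
     (\<Prod>k\<in>{..<n}-{i}-{j}. g ((x(i := a, j := b)) k))" by (rule prod_two[OF i j ij])
  have 2: "(x(i := a, j := b)) i = a" "(x(i := a, j := b)) j = b" using ij by simp_all
  show "(\<Prod>k<n. g ((x(i := a, j := b)) k)) = g a * g b * (\<Prod>k\<in>{..<n}-{i}-{j}. g (x k))"
    unfolding 1 2 prod_rest_eq ..
  show "(\<Prod>k<n. g (x k)) = g (x i) * g (x j) * (\<Prod>k\<in>{..<n}-{i}-{j}. g (x k))" by (rule prod_two[OF i j ij])
qed

lemma rest_pos: fixes g :: "real \<Rightarrow> real" shows "Pm n c x \<Longrightarrow> (\<And>t. 0 < t \<Longrightarrow> t \<le> 1/2 \<Longrightarrow> 0 < g t) \<Longrightarrow> 0 < (\<Prod>k\<in>{..<n}-{i}-{j}. g (x k))"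
  by (intro prod_pos) (auto simp: Pm_def)

lemma key2: "(x::real) < c \<Longrightarrow> c < y \<Longrightarrow> x * y < c * (x + y - c)"
proof -
  assume "x < c" "c < y"
  hence "0 < (c - x) * (y - c)" by simp
  thus ?thesis by (simp add: algebra_simps)
qed

lemma inst_F1:
  assumes P: "Pm n c x" and ne: "\<not>(\<forall>k<n. x k = c)"
  shows "(\<Prod>k<n. x k) < c ^ n"
proof -
  have "\<exists>y. (\<forall>k<n. y k = c) \<and> (\<lambda>x. \<Prod>k<n. x k) x < (\<lambda>x. \<Prod>k<n. x k) y"
  proof (rule mean_smooth_less[OF P ne])
    fix x i j assume Px: "Pm n c x" and ij: "i<n" "j<n" "x i < c" "c < x j"
    have ne: "i \<noteq> j" using ij by auto
    note e = step_prod(1)[OF ij(1,2) ne, where g="\<lambda>t. t" and x=x and a=c and b="x i + x j - c"]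
       step_prod(2)[OF ij(1,2) ne, where g="\<lambda>t. t" and x=x]
    have r: "0 < (\<Prod>k\<in>{..<n}-{i}-{j}. x k)" using rest_pos[OF Px, of "\<lambda>t. t"] by simp
    show "(\<Prod>k<n. x k) < (\<Prod>k<n. (x(i := c, j := x i + x j - c)) k)"
      unfolding e using key2[OF ij(3,4)] r by simp
  qed
  then obtain y where "\<forall>k<n. y k = c" "(\<Prod>k<n. x k) < (\<Prod>k<n. y k)" by blast
  moreover have "(\<Prod>k<n. y k) = c ^ n" using calculation(1) by simp
  ultimately show ?thesis by simp
qed


lemma key2': "(x::real) < c \<Longrightarrow> c < y \<Longrightarrow> (1 - x) * (1 - y) < (1 - c) * (1 - (x + y - c))"
proof -
  assume "x < c" "c < y"
  hence "0 < (c - x) * (y - c)" by simp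
  thus ?thesis by (simp add: algebra_simps)
qed

lemma inst_F2:
  assumes P: "Pm n c x" and ne: "\<not>(\<forall>k<n. x k = c)"
  shows "(\<Prod>k<n. 1 - x k) < (1 - c) ^ n"
proof -
  have "\<exists>y. (\<forall>k<n. y k = c) \<and> (\<lambda>x. \<Prod>k<n. 1 - x k) x < (\<lambda>x. \<Prod>k<n. 1 - x k) y"
  proof (rule mean_smooth_less[OF P ne])
    fix x i j assume Px: "Pm n c x" and ij: "i<n" "j<n" "x i < c" "c < x j"
    have ne: "i \<noteq> j" using ij by auto
    note e = step_prod(1)[OF ij(1,2) ne, where g="\<lambda>t. 1 - t" and x=x and a=c and b="x i + x j - c"]
       step_prod(2)[OF ij(1,2) ne, where g="\<lambda>t. 1 - t" and x=x]
    have r: "0 < (\<Prod>k\<in>{..<n}-{i}-{j}. 1 - x k)" using rest_pos[OF Px, of "\<lambda>t. 1 - t"] by simp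
    show "(\<Prod>k<n. 1 - x k) < (\<Prod>k<n. 1 - (x(i := c, j := x i + x j - c)) k)"
      unfolding e using key2'[OF ij(3,4)] r by simp
  qed
  then obtain y where "\<forall>k<n. y k = c" "(\<Prod>k<n. 1 - x k) < (\<Prod>k<n. 1 - y k)" by blast
  moreover have "(\<Prod>k<n. 1 - y k) = (1 - c) ^ n" using calculation(1) by simp
  ultimately show ?thesis by simp
qed

lemma inst_F3:
  assumes P: "Pm n c x"
  shows "(\<Prod>k<n. 1 - x k) - (\<Prod>k<n. x k) \<le> (1 - c) ^ n - c ^ n"
proof -
  have "\<exists>y. (\<forall>k<n. y k = c) \<and> (\<lambda>x. (\<Prod>k<n. 1 - x k) - (\<Prod>k<n. x k)) x \<le> (\<lambda>x. (\<Prod>k<n. 1 - x k) - (\<Prod>k<n. x k)) y"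
  proof (rule mean_smooth_le[OF P])
    fix x i j assume Px: "Pm n c x" and ij: "i<n" "j<n" "x i < c" "c < x j"
    have ne: "i \<noteq> j" using ij by auto
    note e = step_prod(1)[OF ij(1,2) ne, where g="\<lambda>t. 1 - t" and x=x and a=c and b="x i + x j - c"]
       step_prod(2)[OF ij(1,2) ne, where g="\<lambda>t. 1 - t" and x=x]
       step_prod(1)[OF ij(1,2) ne, where g="\<lambda>t. t" and x=x and a=c and b="x i + x j - c"]
       step_prod(2)[OF ij(1,2) ne, where g="\<lambda>t. t" and x=x]
    define R' where "R' = (\<Prod>k\<in>{..<n}-{i}-{j}. 1 - x k)"
    define R where "R = (\<Prod>k\<in>{..<n}-{i}-{j}. x k)"
    have RR: "R \<le> R'" unfolding R_def R'_def
      using Px by (intro prod_mono) (auto simp: Pm_def)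
    define d where "d = (c - x i) * (x j - c)"
    have d: "0 \<le> d" using ij unfolding d_def by simp
    have e1: "(1 - c) * (1 - (x i + x j - c)) = (1 - x i) * (1 - x j) + d" unfolding d_def by (simp add: algebra_simps)
    have e2: "c * (x i + x j - c) = x i * x j + d" unfolding d_def by (simp add: algebra_simps)
    have "(1 - x i) * (1 - x j) * R' - x i * x j * R \<le> ((1 - x i) * (1 - x j) + d) * R' - (x i * x j + d) * R"
      using mult_right_mono[OF RR d] by (simp add: algebra_simps)
    thus "(\<Prod>k<n. 1 - x k) - (\<Prod>k<n. x k) \<le> (\<Prod>k<n. 1 - (x(i := c, j := x i + x j - c)) k) - (\<Prod>k<n. (x(i := c, j := x i + x j - c)) k)"
      unfolding e e1 e2 R_def[symmetric] R'_def[symmetric] .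
  qed
  then obtain y where y: "\<forall>k<n. y k = c" "(\<Prod>k<n. 1 - x k) - (\<Prod>k<n. x k) \<le> (\<Prod>k<n. 1 - y k) - (\<Prod>k<n. y k)" by blast
  have "(\<Prod>k<n. 1 - y k) = (1 - c) ^ n" "(\<Prod>k<n. y k) = c ^ n" using y(1) by simp_all
  thus ?thesis using y(2) by simp
qed

lemma inst_F4:
  assumes P: "Pm n c x" and ne: "\<not>(\<forall>k<n. x k = c)"
  shows "(\<Prod>k<n. x k / (1 - x k)) < (c / (1 - c)) ^ n"
proof -
  have "\<exists>y. (\<forall>k<n. y k = c) \<and> (\<lambda>x. \<Prod>k<n. x k / (1 - x k)) x < (\<lambda>x. \<Prod>k<n. x k / (1 - x k)) y"
  proof (rule mean_smooth_less[OF P ne])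
    fix x i j assume Px: "Pm n c x" and ij: "i<n" "j<n" "x i < c" "c < x j"
    have ne: "i \<noteq> j" using ij by auto
    note e = step_prod(1)[OF ij(1,2) ne, where g="\<lambda>t. t / (1 - t)" and x=x and a=c and b="x i + x j - c"]
       step_prod(2)[OF ij(1,2) ne, where g="\<lambda>t. t / (1 - t)" and x=x]
    have r: "0 < (\<Prod>k\<in>{..<n}-{i}-{j}. x k / (1 - x k))" using rest_pos[OF Px, of "\<lambda>t. t / (1 - t)"] by simp
    have xb: "0 < x i" "x j \<le> 1/2" using Px ij by (auto simp: Pm_def)
    define s where "s = x i + x j"
    define p where "p = x i * x j"
    define p' where "p' = c * (s - c)"
    have pp: "p < p'" unfolding p_def p'_def s_def using key2[OF ij(3,4)] .
    have s1: "0 < 1 - s" unfolding s_def using ij xb by simp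
    have p0: "0 < p" unfolding p_def using xb ij by simp
    have q: "(1 - x i) * (1 - x j) = 1 - s + p" "(1 - c) * (1 - (s - c)) = 1 - s + p'"
      unfolding s_def p_def p'_def by (simp_all add: algebra_simps)
    have qp: "0 < 1 - s + p" "0 < 1 - s + p'" using s1 p0 pp by simp_all
    have g1: "x i / (1 - x i) * (x j / (1 - x j)) = p / (1 - s + p)"
      unfolding q(1)[symmetric] unfolding p_def by simp
    have g2: "c / (1 - c) * ((x i + x j - c) / (1 - (x i + x j - c))) = p' / (1 - s + p')"
    proof -
      have "c / (1 - c) * ((x i + x j - c) / (1 - (x i + x j - c))) = (c * (s - c)) / ((1 - c) * (1 - (s - c)))"
        unfolding s_def by simp
      also have "\<dots> = p' / (1 - s + p')" unfolding q(2) p'_def ..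
      finally show ?thesis .
    qed
    have "p * (1 - s) < p' * (1 - s)" using pp s1 by simp
    hence "p * (1 - s + p') < p' * (1 - s + p)" by (simp add: algebra_simps)
    hence lt: "p / (1 - s + p) < p' / (1 - s + p')" using qp by (simp add: field_simps)
    show "(\<Prod>k<n. x k / (1 - x k)) < (\<Prod>k<n. (x(i := c, j := x i + x j - c)) k / (1 - (x(i := c, j := x i + x j - c)) k))"
      unfolding e g1 g2 using mult_strict_right_mono[OF lt r] .
  qed
  then obtain y where "\<forall>k<n. y k = c" "(\<Prod>k<n. x k / (1 - x k)) < (\<Prod>k<n. y k / (1 - y k))" by blast
  moreover have "(\<Prod>k<n. y k / (1 - y k)) = (c / (1 - c)) ^ n" using calculation(1) by simp
  ultimately show ?thesis by simp
qed

lemma bern_nat: "0 \<le> (s::real) \<Longrightarrow> 1 + real n * s \<le> (1 + s) ^ n"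
proof (induction n)
  case 0 thus ?case by simp
next
  case (Suc n)
  have "1 + real (Suc n) * s \<le> (1 + real n * s) * (1 + s)"
    using Suc.prems by (simp add: algebra_simps)
  also have "\<dots> \<le> (1 + s) ^ n * (1 + s)"
    using Suc by (intro mult_right_mono) auto
  finally show ?case by (simp add: mult.commute)
qed

lemma bern_powr:
  assumes t: "0 \<le> (t::real)" and n: "0 < n"
  shows "(1 + t) powr (1 / real n) \<le> 1 + t / real n"
proof -
  have pos: "0 < 1 + t / real n" using t n by (simp add: add_pos_nonneg)
  have "1 + t \<le> (1 + t / real n) ^ n" using bern_nat[of "t / real n" n] t n by simp
  hence "(1 + t) powr (1 / real n) \<le> ((1 + t / real n) ^ n) powr (1 / real n)"
    using t by (intro powr_mono2) auto
  also have "((1 + t / real n) ^ n) = (1 + t / real n) powr (real n)"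
    by (rule powr_realpow[OF pos, symmetric])
  also have "\<dots> powr (1 / real n) = 1 + t / real n"
    using pos n by (simp add: powr_powr)
  finally show ?thesis .
qed

definition Pg :: "nat \<Rightarrow> real \<Rightarrow> (nat \<Rightarrow> real) \<Rightarrow> bool" where
  "Pg n c x \<longleftrightarrow> (\<forall>k<n. 0 < x k \<and> x k \<le> 1/2) \<and> (\<Prod>k<n. x k) = c ^ n"

lemma gm_pair:
  assumes P: "Pg n c x" and c: "0 < c" and ne: "\<not>(\<forall>k<n. x k = c)"
  shows "\<exists>i j. i<n \<and> j<n \<and> x i < c \<and> c < x j \<and> (\<forall>k<n. x i \<le> x k)"
proof -
  obtain k0 where k0: "k0<n" "x k0 \<noteq> c" using ne by blast
  have pos: "\<forall>k<n. 0 < x k" using P by (simp add: Pg_def)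
  have pr: "(\<Prod>k<n. x k) = (\<Prod>k<n. c)" using P by (simp add: Pg_def)
  define m where "m = Min (x ` {..<n})"
  have "m \<in> x ` {..<n}" unfolding m_def using k0 by (intro Min_in) auto
  then obtain i where i: "i<n" "x i = m" by auto
  have imin: "\<forall>k<n. x i \<le> x k" using i unfolding m_def by auto
  have xi: "x i < c"
  proof (rule ccontr)
    assume "\<not> x i < c"
    hence ge: "\<forall>k<n. c \<le> x k" using imin by force
    hence "c < x k0" using k0 by force
    hence "(\<Prod>k<n. c) < (\<Prod>k<n. x k)"
      using ge c k0 by (intro prod_mono_strict[of k0]) auto
    thus False using pr by simp
  qed
  have "\<exists>j<n. c < x j"
  proof (rule ccontr)
    assume "\<not> ?thesis"
    hence le: "\<forall>k<n. x k \<le> c" by force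
    have "(\<Prod>k<n. x k) < (\<Prod>k<n. c)"
      using le c pos xi i by (intro prod_mono_strict[of i]) (auto simp: less_imp_le)
    thus False using pr by simp
  qed
  thus ?thesis using i xi imin by blast
qed

lemma gm_step:
  assumes P: "Pg n c x" and c: "0 < c" and i: "i<n" and j: "j<n" and xi: "x i < c" and xj: "c < x j"
  defines "y \<equiv> x(i := c, j := x i * x j / c)"
  shows "Pg n c y" "{k. k<n \<and> y k \<noteq> c} \<subset> {k. k<n \<and> x k \<noteq> c}"
proof -
  have ij: "i \<noteq> j" using xi xj by auto
  have yi: "y i = c" using ij unfolding y_def by simp
  have yj: "y j = x i * x j / c" unfolding y_def by simp
  have xb: "0 < x i" "x j \<le> 1/2" "0 < x j" using P i j by (auto simp: Pg_def)
  have yjb: "0 < y j" "y j \<le> 1/2"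
  proof -
    show "0 < y j" using yj xb c by simp
    have "x i * x j / c \<le> x j" using xi xb c by (simp add: field_simps)
    thus "y j \<le> 1/2" using yj xb by linarith
  qed
  have dom: "\<forall>k<n. 0 < y k \<and> y k \<le> 1/2"
  proof (intro allI impI)
    fix k assume k: "k < n"
    show "0 < y k \<and> y k \<le> 1/2"
    proof (cases "k = j")
      case True thus ?thesis using yjb by simp
    next
      case False
      show ?thesis
      proof (cases "k = i")
        case True thus ?thesis using yi xi xj xb by simp
      next
        case False
        hence "y k = x k" using \<open>k \<noteq> j\<close> unfolding y_def by simp
        thus ?thesis using P k by (simp add: Pg_def)
      qed
    qed
  qed
  have "(\<Prod>k<n. y k) = c * (x i * x j / c) * (\<Prod>k\<in>{..<n}-{i}-{j}. x k)"
    unfolding y_def by (rule step_prod(1)[OF i j ij, where g="\<lambda>t. t"])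
  also have "\<dots> = (\<Prod>k<n. x k)" using c by (simp add: step_prod(2)[OF i j ij, where g="\<lambda>t. t"])
  finally show "Pg n c y" using dom P by (simp add: Pg_def)
  show "{k. k<n \<and> y k \<noteq> c} \<subset> {k. k<n \<and> x k \<noteq> c}"
  proof
    show "{k. k<n \<and> y k \<noteq> c} \<subseteq> {k. k<n \<and> x k \<noteq> c}"
    proof
      fix k assume "k \<in> {k. k<n \<and> y k \<noteq> c}"
      hence k: "k<n" "y k \<noteq> c" by auto
      have "x k \<noteq> c"
      proof (cases "k = j")
        case True thus ?thesis using xj by simp
      next
        case False
        hence "k \<noteq> i" using k(2) yi by auto
        hence "y k = x k" using False unfolding y_def by simp
        thus ?thesis using k(2) by simp
      qed
      thus "k \<in> {k. k<n \<and> x k \<noteq> c}" using k(1) by simp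
    qed
    have "i \<in> {k. k<n \<and> x k \<noteq> c}" "i \<notin> {k. k<n \<and> y k \<noteq> c}" using yi xi i by auto
    thus "{k. k<n \<and> y k \<noteq> c} \<noteq> {k. k<n \<and> x k \<noteq> c}" by blast
  qed
qed

lemma gm_smooth_less:
  fixes F :: "(nat \<Rightarrow> real) \<Rightarrow> real"
  assumes P: "Pg n c x" and c: "0 < c" and ne: "\<not>(\<forall>k<n. x k = c)"
    and Fs: "\<And>x i j. Pg n c x \<Longrightarrow> i<n \<Longrightarrow> j<n \<Longrightarrow> x i < c \<Longrightarrow> c < x j \<Longrightarrow> (\<forall>k<n. x i \<le> x k) \<Longrightarrow>
              F x < F (x(i := c, j := x i * x j / c))"
  shows "\<exists>y. (\<forall>k<n. y k = c) \<and> F x < F y"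
proof -
  have gen: "\<exists>y. Pg n c y \<and> (\<forall>k<n. y k = c) \<and> F z \<le> F y" if Pz: "Pg n c z" for z
  proof (rule smooth_gen[where P="Pg n c" and F=F and n=n and c=c])
    fix x assume Px: "Pg n c x" and ne: "\<not>(\<forall>k<n. x k = c)"
    obtain i j where ij: "i<n" "j<n" "x i < c" "c < x j" "\<forall>k<n. x i \<le> x k"
      using gm_pair[OF Px c ne] by blast
    note st = gm_step[OF Px c ij(1-4)]
    show "\<exists>y. Pg n c y \<and> {k. k<n \<and> y k \<noteq> c} \<subset> {k. k<n \<and> x k \<noteq> c} \<and> F x \<le> F y"
      using st Fs[OF Px ij] by (intro exI[of _ "x(i := c, j := x i * x j / c)"]) auto
  qed (rule Pz)
  obtain i j where ij: "i<n" "j<n" "x i < c" "c < x j" "\<forall>k<n. x i \<le> x k"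
    using gm_pair[OF P c ne] by blast
  note st = gm_step[OF P c ij(1-4)]
  obtain z where z: "\<forall>k<n. z k = c" "F (x(i := c, j := x i * x j / c)) \<le> F z"
    using gen[OF st(1)] by blast
  thus ?thesis using Fs[OF P ij] by (intro exI[of _ z]) auto
qed


lemma alz_step:
  assumes Px: "Pg n c x" and c: "0 < c" and i: "i<n" and j: "j<n" and xi: "x i < c" and xj: "c < x j"
    and imin: "\<forall>k<n. x i \<le> x k"
  defines "y \<equiv> x(i := c, j := x i * x j / c)"
  shows "(\<Prod>k<n. (1 - y k) powr (1 / real n)) + 2 * ((\<Sum>k<n. y k) / real n)
       < (\<Prod>k<n. (1 - x k) powr (1 / real n)) + 2 * ((\<Sum>k<n. x k) / real n)"
proof -
  have ij: "i \<noteq> j" using xi xj by auto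
  have n: "0 < n" using i by simp
  define N where "N = real n"
  have N: "0 < N" using n N_def by simp
  have xb: "0 < x i" "x j \<le> 1/2" "0 < x j" "x i < 1" "x j < 1" using Px i j by (auto simp: Pg_def)
  have dom: "\<forall>k<n. 0 < x k \<and> x k \<le> 1/2" using Px by (simp add: Pg_def)
  have gp: "\<And>z. (\<Prod>k<n. (1 - z k) powr (1 / real n)) = (\<Prod>k<n. 1 - z k) powr (1 / real n)"
    by (simp add: prod_powr_distrib)
  define Rp where "Rp = (\<Prod>k\<in>{..<n}-{i}-{j}. 1 - x k)"
  have Rp: "0 < Rp" unfolding Rp_def using dom by (intro prod_pos) auto
  define d where "d = (c - x i) * (x j - c) / c"
  have d: "0 < d" unfolding d_def using xi xj c by simp
  define q where "q = (1 - x i) * (1 - x j)"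
  have q: "0 < q" unfolding q_def using xb by simp
  have ey: "(\<Prod>k<n. 1 - y k) = (1 - c) * (1 - x i * x j / c) * Rp"
    unfolding y_def Rp_def by (rule step_prod(1)[OF i j ij, where g="\<lambda>t. 1 - t"])
  have ex: "(\<Prod>k<n. 1 - x k) = q * Rp"
    unfolding q_def Rp_def by (rule step_prod(2)[OF i j ij, where g="\<lambda>t. 1 - t"])
  have qd: "(1 - c) * (1 - x i * x j / c) = q + d"
    unfolding q_def d_def using c by (simp add: field_simps)
  define t where "t = d / q"
  have t: "0 < t" unfolding t_def using d q by simp
  have ey2: "(\<Prod>k<n. 1 - y k) = (\<Prod>k<n. 1 - x k) * (1 + t)"
    unfolding ey ex qd t_def using q by (simp add: field_simps)
  define g where "g = (\<Prod>k<n. 1 - x k) powr (1 / real n)"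
  have px: "0 < (\<Prod>k<n. 1 - x k)" using ex q Rp by simp
  have gy: "(\<Prod>k<n. 1 - y k) powr (1 / real n) \<le> g * (1 + t / N)"
  proof -
    have "(\<Prod>k<n. 1 - y k) powr (1 / real n) = g * (1 + t) powr (1 / real n)"
      unfolding ey2 g_def using px t by (simp add: powr_mult)
    also have "\<dots> \<le> g * (1 + t / N)"
      using bern_powr[of t n] t n unfolding N_def g_def by (intro mult_left_mono) auto
    finally show ?thesis .
  qed
  have glt: "g < 1 - x i"
  proof -
    have "(\<Prod>k<n. 1 - x k) < (\<Prod>k<n. 1 - x i)"
      using dom imin xi xj j by (intro prod_mono_strict[of j]) auto
    hence "(\<Prod>k<n. 1 - x k) < (1 - x i) ^ n" by simp
    hence "g < ((1 - x i) ^ n) powr (1 / real n)"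
      unfolding g_def using px n by (intro powr_less_mono2) auto
    also have "((1 - x i) ^ n) = (1 - x i) powr (real n)"
      using xb by (simp add: powr_realpow)
    also have "\<dots> powr (1 / real n) = 1 - x i"
      using xb n by (simp add: powr_powr)
    finally show ?thesis .
  qed
  have gdiff: "(\<Prod>k<n. 1 - y k) powr (1 / real n) - g < 2 * d / N"
  proof -
    have "(\<Prod>k<n. 1 - y k) powr (1 / real n) - g \<le> g * t / N" using gy by (simp add: algebra_simps)
    also have "g * t / N < (1 - x i) * t / N"
      using glt t N by (intro divide_strict_right_mono mult_strict_right_mono) auto
    also have "(1 - x i) * t = d / (1 - x j)"
    proof -
      have h: "1 - x i \<noteq> 0" using xb by auto
      have "(1 - x i) * t = ((1 - x i) * d) / ((1 - x i) * (1 - x j))" unfolding t_def q_def by simp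
      also have "\<dots> = d / (1 - x j)" by (rule nonzero_mult_divide_mult_cancel_left[OF h])
      finally show ?thesis .
    qed
    also have "d / (1 - x j) / N \<le> 2 * d / N"
    proof -
      have "d / (1 - x j) \<le> 2 * d" using d xb by (simp add: field_simps)
      thus ?thesis using N by (intro divide_right_mono) auto
    qed
    finally show ?thesis .
  qed
  have sy: "(\<Sum>k<n. y k) = (\<Sum>k<n. x k) - d"
  proof -
    have r: "(\<Sum>k\<in>{..<n}-{i}-{j}. y k) = (\<Sum>k\<in>{..<n}-{i}-{j}. x k)"
      unfolding y_def by (intro sum.cong) auto
    have yi: "y i = c" "y j = x i * x j / c" using ij unfolding y_def by simp_all
    have "x i * x j / c = x i + x j - c - d" unfolding d_def using c by (simp add: field_simps)
    thus ?thesis unfolding sum_two[OF i j ij, of y] sum_two[OF i j ij, of x] r yi by simp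
  qed
  have "(\<Prod>k<n. (1 - y k) powr (1 / real n)) + 2 * ((\<Sum>k<n. y k) / real n)
      = (\<Prod>k<n. 1 - y k) powr (1 / real n) + 2 * ((\<Sum>k<n. x k) / N) - 2 * d / N"
    unfolding gp sy N_def by (simp add: diff_divide_distrib)
  also have "\<dots> < g + 2 * ((\<Sum>k<n. x k) / N)" using gdiff by simp
  also have "\<dots> = (\<Prod>k<n. (1 - x k) powr (1 / real n)) + 2 * ((\<Sum>k<n. x k) / real n)"
    unfolding gp g_def N_def ..
  finally show ?thesis .
qed

lemma inst_alz:
  assumes P: "Pg n c x" and c: "0 < c" and ne: "\<not>(\<forall>k<n. x k = c)"
  shows "1 + c < GM' n x + 2 * AM n x"
proof -
  define F where "F = (\<lambda>x::nat\<Rightarrow>real. - ((\<Prod>k<n. (1 - x k) powr (1 / real n)) + 2 * ((\<Sum>k<n. x k) / real n)))"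
  have "\<exists>y. (\<forall>k<n. y k = c) \<and> F x < F y"
  proof (rule gm_smooth_less[OF P c ne])
    fix x i j assume a: "Pg n c x" "i<n" "j<n" "x i < c" "c < x j" "\<forall>k<n. x i \<le> x k"
    from alz_step[OF a(1) c a(2-6)] show "F x < F (x(i := c, j := x i * x j / c))" unfolding F_def by simp
  qed
  then obtain y where y: "\<forall>k<n. y k = c" "F x < F y" by blast
  have n: "0 < n" using ne by (cases n) auto
  have c1: "c < 1"
  proof -
    obtain k where "k<n" using n by blast
    have "(\<Prod>k<n. x k) \<le> (\<Prod>k<n. (1::real))"
      using P by (intro prod_mono) (auto simp: Pg_def)
    hence "c ^ n \<le> 1" using P by (simp add: Pg_def)
    hence "c \<le> 1" using c n by (meson le_less_trans not_le one_less_power)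
    moreover have "c \<noteq> 1"
    proof
      assume "c = 1"
      hence "(\<Prod>k<n. x k) = (\<Prod>k<n. (1::real))" using P by (simp add: Pg_def)
      moreover have "(\<Prod>k<n. x k) < (\<Prod>k<n. (1::real))"
        using P \<open>k<n\<close> by (intro prod_mono_strict[of k]) (auto simp: Pg_def)
      ultimately show False by simp
    qed
    ultimately show ?thesis by simp
  qed
  have "F y = - ((\<Prod>k<n. (1 - c) powr (1 / real n)) + 2 * ((\<Sum>k<n. c) / real n))"
    unfolding F_def using y(1) by simp
  also have "(\<Prod>k<n. (1 - c) powr (1 / real n)) = ((1 - c) powr (1 / real n)) ^ n" by simp
  also have "\<dots> = 1 - c" using c1 n by (simp add: powr_power)
  also have "(\<Sum>k<n. c) / real n = c" using n by simp
  finally have "F y = - (1 + c)" by simp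
  thus ?thesis using y(2) unfolding F_def GM'_def AM_def by simp
qed

lemma root_pow: "0 < (z::real) \<Longrightarrow> 0 < n \<Longrightarrow> (z powr (1 / real n)) ^ n = z"
  by (simp add: powr_power)

theorem theorem4p2:
  fixes n :: nat and x :: "nat \<Rightarrow> real"
  assumes "n \<ge> 1"
    and "\<And>i. i < n \<Longrightarrow> 0 < x i \<and> x i \<le> 1 / 2"
    and "\<exists>i<n. \<exists>j<n. x i \<noteq> x j"
  shows "let A = AM n x; G = GM n x; A' = AM' n x; G' = GM' n x;
             R = ln (identric A' G' / identric A G) / ln (sqrt ((A' * G') / (A * G)))
         in max (((A' ^ n - G' ^ n) / (A ^ n - G ^ n)) * ((A * G) / (A' * G')) powr (real n / 2))
                (((A' - G') / (A - G)) * ((A * G) / (A' * G')) powr (1 / 2))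
              < ln (A' / G') / ln (A / G)
          \<and> ln (A' / G') / ln (A / G) < ((A' - G') / (A - G)) * R
          \<and> ((A' - G') / (A - G)) * R < min ((A' - G') / (A - G)) R
          \<and> min ((A' - G') / (A - G)) R < 1
          \<and> A' / G' < (A' / G') powr (1 / R)
          \<and> (A' / G') powr (1 / R) < (A / G) powr ((A' - G') / (A - G))
          \<and> (A / G) powr ((A' - G') / (A - G)) < A / G
          \<and> A / G < (A' / G') powr (((A' * G') / (A * G)) powr (real n / 2))
          \<and> (A' ^ n - G' ^ n) / (A ^ n - G ^ n)
              < ((A' * G') powr (real n / 2) * ln (A' / G')) / ((A * G) powr (real n / 2) * ln (A / G))
          \<and> ((A' * G') powr (real n / 2) * ln (A' / G')) / ((A * G) powr (real n / 2) * ln (A / G))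
              < ((A' * G') / (A * G)) powr (real n / 2)"
proof -
  note n1 = assms(1)
  have dom: "\<forall>k<n. 0 < x k \<and> x k \<le> 1/2" using assms(2) by blast
  obtain i j where ij: "i<n" "j<n" "x i \<noteq> x j" using assms(3) by blast
  have n: "0 < n" using n1 by simp
  have N: "0 < real n" using n by simp
  define A where "A = AM n x"
  define G where "G = GM n x"
  define A' where "A' = AM' n x"
  define G' where "G' = GM' n x"
  have sumA: "(\<Sum>k<n. x k) = real n * A" unfolding A_def AM_def using N by simp
  have PmA: "Pm n A x" unfolding Pm_def using dom sumA by simp
  have neA: "\<not>(\<forall>k<n. x k = A)" using ij by auto
  have px: "0 < (\<Prod>k<n. x k)" using dom by (intro prod_pos) auto
  have px': "0 < (\<Prod>k<n. 1 - x k)" using dom by (intro prod_pos) auto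
  have Gdef: "G = (\<Prod>k<n. x k) powr (1 / real n)" unfolding G_def GM_def by (simp add: prod_powr_distrib)
  have G'def: "G' = (\<Prod>k<n. 1 - x k) powr (1 / real n)" unfolding G'_def GM'_def by (simp add: prod_powr_distrib)
  have Gpos: "0 < G" "0 < G'"
  proof -
    have "(\<Prod>k<n. x k) \<noteq> 0" "(\<Prod>k<n. 1 - x k) \<noteq> 0" using px px' by linarith+
    thus "0 < G" "0 < G'" unfolding Gdef G'def by (simp_all only: powr_gt_zero not_False_eq_True)
  qed
  have Gn: "G ^ n = (\<Prod>k<n. x k)" unfolding Gdef using px n by (rule root_pow)
  have G'n: "G' ^ n = (\<Prod>k<n. 1 - x k)" unfolding G'def using px' n by (rule root_pow)
  have A'A: "A' = 1 - A"
  proof -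
    have "A' = (\<Sum>k<n. 1 - x k) / real n" unfolding A'_def AM'_def ..
    also have "(\<Sum>k<n. 1 - x k) = real n - real n * A" by (simp add: sum_subtractf sumA)
    finally have "A' = (real n - real n * A) / real n" .
    also have "\<dots> = 1 - A" using N by (simp add: diff_divide_distrib)
    finally show ?thesis .
  qed
  have Apos: "0 < A" and Ale: "A \<le> 1/2"
  proof -
    have "(\<Sum>k<n. x k) \<le> (\<Sum>k<n. 1/2)" using dom by (intro sum_mono) auto
    thus "A \<le> 1/2" using sumA N by simp
    have "0 < (\<Sum>k<n. x k)" using dom n by (intro sum_pos) auto
    thus "0 < A" using sumA N by (simp add: zero_less_mult_iff)
  qed
  have GA: "G < A"
  proof -
    have "G ^ n < A ^ n" using inst_F1[OF PmA neA] Gn by simp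
    thus ?thesis using Apos by (meson less_imp_le power_less_imp_less_base)
  qed
  have GA': "G' < A'"
  proof -
    have "G' ^ n < A' ^ n" using inst_F2[OF PmA neA] G'n A'A by simp
    moreover have "0 \<le> A'" using Ale A'A by simp
    ultimately show ?thesis by (rule power_less_imp_less_base)
  qed
  have np: "A ^ n - G ^ n \<le> A' ^ n - G' ^ n" using inst_F3[OF PmA] Gn G'n A'A by simp
  have kf: "A' / G' < A / G"
  proof -
    have e1: "(\<Prod>k<n. x k / (1 - x k)) = (\<Prod>k<n. x k) / (\<Prod>k<n. 1 - x k)" by (rule prod_dividef)
    have e2: "(G / G') ^ n = (\<Prod>k<n. x k) / (\<Prod>k<n. 1 - x k)" unfolding power_divide Gn G'n ..
    have "(G / G') ^ n < (A / (1 - A)) ^ n" unfolding e2 e1[symmetric] by (rule inst_F4[OF PmA neA])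
    hence "(G / G') ^ n < (A / A') ^ n" unfolding A'A .
    moreover have "0 \<le> A / A'" using Apos Ale A'A by simp
    ultimately have lt: "G / G' < A / A'" by (rule power_less_imp_less_base)
    have A'p: "0 < A'" using Ale A'A by simp
    have "G * A' < A * G'" using lt Gpos A'p by (simp add: divide_less_eq less_divide_eq mult.commute)
    thus ?thesis using Gpos A'p Apos by (simp add: divide_less_eq less_divide_eq mult.commute)
  qed
  have alz: "A' - G' < A - G"
  proof -
    have Pg: "Pg n G x" unfolding Pg_def using dom Gn by simp
    have neG: "\<not>(\<forall>k<n. x k = G)" using ij by auto
    have "1 + G < G' + 2 * A" using inst_alz[OF Pg Gpos(1) neG] unfolding G'_def A_def .
    thus ?thesis using A'A by simp
  qed
  have AG': "A \<le> G'"
  proof -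
    have h1: "(\<Prod>k<n. (1/2::real)) \<le> (\<Prod>k<n. 1 - x k)" using dom by (intro prod_mono) auto
    have h2: "(\<Prod>k<n. (1/2::real)) = (1/2) ^ n" by (simp only: prod_constant card_lessThan)
    have "(1/2) ^ n \<le> G' ^ n" using h1 unfolding h2 G'n .
    moreover have "0 \<le> G'" using Gpos by simp
    ultimately have "1/2 \<le> G'" using n by (metis gr0_implies_Suc power_le_imp_le_base)
    thus ?thesis using Ale by simp
  qed
  have AA': "A \<le> A'" using Ale A'A by simp
  have C: "let R = ln (identric A' G' / identric A G) / ln (sqrt ((A' * G') / (A * G)))
         in max (((A' ^ n - G' ^ n) / (A ^ n - G ^ n)) * ((A * G) / (A' * G')) powr (real n / 2))
                (((A' - G') / (A - G)) * ((A * G) / (A' * G')) powr (1 / 2))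
              < ln (A' / G') / ln (A / G)
          \<and> ln (A' / G') / ln (A / G) < ((A' - G') / (A - G)) * R
          \<and> ((A' - G') / (A - G)) * R < min ((A' - G') / (A - G)) R
          \<and> min ((A' - G') / (A - G)) R < 1
          \<and> A' / G' < (A' / G') powr (1 / R)
          \<and> (A' / G') powr (1 / R) < (A / G) powr ((A' - G') / (A - G))
          \<and> (A / G) powr ((A' - G') / (A - G)) < A / G
          \<and> A / G < (A' / G') powr (((A' * G') / (A * G)) powr (real n / 2))
          \<and> (A' ^ n - G' ^ n) / (A ^ n - G ^ n)
              < ((A' * G') powr (real n / 2) * ln (A' / G')) / ((A * G) powr (real n / 2) * ln (A / G))
          \<and> ((A' * G') powr (real n / 2) * ln (A' / G')) / ((A * G) powr (real n / 2) * ln (A / G))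
              < ((A' * G') / (A * G)) powr (real n / 2)"
    by (rule core_AG[OF Gpos(1) GA Gpos(2) GA' AA' AG' kf alz np n1])
  show ?thesis using C unfolding Let_def A_def G_def A'_def G'_def .
qed

end
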